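(* Let $p^{(0)}=p$ and, for $k\ge1$, given any orthogonal matrices $R_k\in\mathbb{R}^{d\times d}$, let $F_k^*\in\arg\min_{F\in\mathcal{F}}\mathrm{KL}\big(F\#\gamma\,\|\,R_k\#p^{(k-1)}\big)$ (assumed to exist) and $p^{(k)}=(F_k^* )^{-1}\#\big(R_k\#p^{(k-1)}\big)$. Let $q^{(0)}=\gamma$ and $q^{(k)}=(R_1^\top\circ F_1^*\circ R_2^\top\circ F_2^*\circ\cdots\circ R_k^\top\circ F_k^* )\#\gamma$. Then for all $k\ge1$, $$\mathrm{KL}(\gamma\|p^{(k)})\le\mathrm{KL}(\gamma\|p^{(k-1)}),\qquad \mathrm{KL}(q^{(k)}\|p)\le\mathrm{KL}(q^{(k-1)}\|p).$$
   Context: $\gamma=\mathcal{N}(0,I_d)$; $p$ is a probability density on $\mathbb{R}^d$. $\mathcal{F}$ is the set of coordinatewise diffeomorphisms $F(\mathbf{x})=(F_1(x_1),\dots,F_d(x_d))$ of $\mathbb{R}^d$ with each $F_i:\mathbb{R}\to\mathbb{R}$ a diffeomorphism. For a diffeomorphism (or orthogonal linear map) $T$ and a distribution $\mu$, $T\#\mu$ denotes the law of $T(X)$ with $X\sim\mu$; for orthogonal $R$, $R\#p$ has density $p(R^\top\mathbf{x})$. $\mathrm{KL}(q\|p)=\mathbb{E}_q[\log(q/p)]$. *)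

theory Defs
  imports "HOL-Probability.Probability"
begin

text \<open>It is +infinity if Q is not absolutely continuous w.r.t. P. Otherwise it is the
  Q-integral of log of the Radon-Nikodym density dQ/dP, split into positive and
  negative parts (the negative part is always finite for probability measures).\<close>
definition KL :: "'a measure \<Rightarrow> 'a measure \<Rightarrow> ereal" where
  "KL Q P =
     (if absolutely_continuous P Q
      then enn2ereal (\<integral>\<^sup>+ x. ennreal (max 0 (ln (enn2real (RN_deriv P Q x)))) \<partial>Q)
         - enn2ereal (\<integral>\<^sup>+ x. ennreal (max 0 (- ln (enn2real (RN_deriv P Q x)))) \<partial>Q)
      else \<infinity>)"

definition gaussian :: "(real ^ 'n :: finite) measure" where
  "gaussian = density lborel (\<lambda>x. ennreal (\<Prod>i\<in>UNIV. std_normal_density (x $ i)))"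

definition diffeo_real :: "(real \<Rightarrow> real) \<Rightarrow> bool" where
  "diffeo_real f \<longleftrightarrow> bij f
     \<and> (\<exists>f'. (\<forall>x. (f has_real_derivative f' x) (at x)) \<and> continuous_on UNIV f')
     \<and> (\<exists>g'. (\<forall>y. (inv f has_real_derivative g' y) (at y)) \<and> continuous_on UNIV g')"

definition coord_diffeos :: "(real ^ 'n :: finite \<Rightarrow> real ^ 'n) set" where
  "coord_diffeos = {F. \<exists>f :: 'n \<Rightarrow> real \<Rightarrow> real.
       (\<forall>i. diffeo_real (f i)) \<and> F = (\<lambda>x. \<chi> i. f i (x $ i))}"

definition push :: "('a \<Rightarrow> 'b::topological_space) \<Rightarrow> 'a measure \<Rightarrow> 'b measure" where
  "push T \<mu> = distr \<mu> borel T"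

fun pseq :: "(real ^ 'n :: finite \<Rightarrow> real) \<Rightarrow> (nat \<Rightarrow> real ^ 'n ^ 'n)
              \<Rightarrow> (nat \<Rightarrow> real ^ 'n \<Rightarrow> real ^ 'n) \<Rightarrow> nat \<Rightarrow> (real ^ 'n) measure" where
  "pseq p R F 0 = density lborel (\<lambda>x. ennreal (p x))"
| "pseq p R F (Suc k) =
     push (inv (F (Suc k))) (push (\<lambda>x. R (Suc k) *v x) (pseq p R F k))"

fun Tcomp :: "(nat \<Rightarrow> real ^ 'n ^ 'n) \<Rightarrow> (nat \<Rightarrow> real ^ 'n \<Rightarrow> real ^ 'n)
              \<Rightarrow> nat \<Rightarrow> real ^ 'n :: finite \<Rightarrow> real ^ 'n" where
  "Tcomp R F 0 = id"
| "Tcomp R F (Suc k) = Tcomp R F k \<circ> (\<lambda>x. transpose (R (Suc k)) *v x) \<circ> F (Suc k)"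

definition qseq :: "(nat \<Rightarrow> real ^ 'n ^ 'n) \<Rightarrow> (nat \<Rightarrow> real ^ 'n \<Rightarrow> real ^ 'n)
              \<Rightarrow> nat \<Rightarrow> (real ^ 'n :: finite) measure" where
  "qseq R F k = push (Tcomp R F k) gaussian"

end

theory Submission imports Defs "HOL-Analysis.Change_Of_Vars" begin

lemma ac_distr_iff:
  assumes sQ: "sets Q = sets P"
  and T: "T \<in> measurable P M'" and T': "T' \<in> measurable M' P"
  and inv1: "\<forall>x\<in>space P. T' (T x) = x"
  shows "absolutely_continuous (distr P M' T) (distr Q M' T) \<longleftrightarrow> absolutely_continuous P Q"
proof
  have TQ: "T \<in> measurable Q M'" using T sQ by (simp add: measurable_def sets_eq_imp_space_eq[OF sQ])
  have spQ: "space Q = space P" using sets_eq_imp_space_eq[OF sQ] .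
  assume ac: "absolutely_continuous (distr P M' T) (distr Q M' T)"
  show "absolutely_continuous P Q" unfolding absolutely_continuous_def
  proof
    fix A assume A: "A \<in> null_sets P"
    hence As: "A \<in> sets P" by auto
    let ?B = "T' -` A \<inter> space M'"
    have Bs: "?B \<in> sets M'" using T' As by (auto simp: measurable_def)
    have eq: "T -` ?B \<inter> space P = A"
      using inv1 sets.sets_into_space[OF As] T by (auto simp: measurable_def)
    have "?B \<in> null_sets (distr P M' T)" using A Bs eq by (simp add: null_sets_distr_iff[OF T])
    hence "?B \<in> null_sets (distr Q M' T)" using ac unfolding absolutely_continuous_def by auto
    hence "T -` ?B \<inter> space Q \<in> null_sets Q" by (simp add: null_sets_distr_iff[OF TQ])
    thus "A \<in> null_sets Q" using eq spQ by simp
  qed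
next
  have TQ: "T \<in> measurable Q M'" using T sQ by (simp add: measurable_def sets_eq_imp_space_eq[OF sQ])
  have spQ: "space Q = space P" using sets_eq_imp_space_eq[OF sQ] .
  assume ac: "absolutely_continuous P Q"
  show "absolutely_continuous (distr P M' T) (distr Q M' T)" unfolding absolutely_continuous_def
  proof
    fix A assume "A \<in> null_sets (distr P M' T)"
    hence "T -` A \<inter> space P \<in> null_sets P" "A \<in> sets M'" by (simp_all add: null_sets_distr_iff[OF T])
    hence "T -` A \<inter> space Q \<in> null_sets Q" "A \<in> sets M'" using ac spQ unfolding absolutely_continuous_def by auto
    thus "A \<in> null_sets (distr Q M' T)" by (simp add: null_sets_distr_iff[OF TQ])
  qed
qed

lemma KL_distr:
  assumes P: "sigma_finite_measure P" and sQ: "sets Q = sets P"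
  and T: "T \<in> measurable P M'" and T': "T' \<in> measurable M' P"
  and inv1: "\<forall>x\<in>space P. T' (T x) = x"
  shows "KL (distr Q M' T) (distr P M' T) = KL Q P"
proof (cases "absolutely_continuous P Q")
  case False
  then show ?thesis unfolding KL_def using ac_distr_iff[OF assms(2-5)] by simp
next
  case True
  interpret sigma_finite_measure P by fact
  have TQ: "T \<in> measurable Q M'" using T sQ by (simp add: measurable_def sets_eq_imp_space_eq[OF sQ])
  have ac': "absolutely_continuous (distr P M' T) (distr Q M' T)" using ac_distr_iff[OF assms(2-5)] True by simp
  have AE: "AE x in Q. RN_deriv (distr P M' T) (distr Q M' T) (T x) = RN_deriv P Q x"
    by (rule absolutely_continuous_AE[OF sQ True RN_deriv_distr[OF T T' inv1 ac' sQ]])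
  have I: "(\<integral>\<^sup>+ x. ennreal (h (enn2real (RN_deriv (distr P M' T) (distr Q M' T) x))) \<partial>distr Q M' T)
     = (\<integral>\<^sup>+ x. ennreal (h (enn2real (RN_deriv P Q x))) \<partial>Q)" if h: "h \<in> borel_measurable borel" for h :: "real \<Rightarrow> real"
  proof -
    have m: "(\<lambda>x. ennreal (h (enn2real (RN_deriv (distr P M' T) (distr Q M' T) x)))) \<in> borel_measurable (distr Q M' T)"
      using h by (simp add: measurable_compose[OF borel_measurable_RN_deriv])
    show ?thesis
      apply (subst nn_integral_distr[OF TQ m])
      apply (rule nn_integral_cong_AE)
      using AE by eventually_elim simp
  qed
  have h1: "(\<lambda>t::real. max 0 (ln t)) \<in> borel_measurable borel" by measurable
  have h2: "(\<lambda>t::real. max 0 (- ln t)) \<in> borel_measurable borel" by measurable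
  show ?thesis unfolding KL_def using True ac' I[OF h1] I[OF h2] by simp
qed


typedef 'a wr = "UNIV :: 'a set" by auto

instance wr :: (finite) finite
proof
  have "(UNIV :: 'a wr set) = Abs_wr ` UNIV" by (metis Abs_wr_cases surj_def)
  thus "finite (UNIV :: 'a wr set)" by (metis finite finite_imageI)
qed

definition enc :: "'a::finite wr \<Rightarrow> nat" where "enc x = to_nat_on (UNIV::'a set) (Rep_wr x)"

lemma enc_inj: "inj enc"
  unfolding enc_def inj_def
  by (metis Rep_wr_inject UNIV_I countable_finite finite inj_on_to_nat_on inj_onD)

instantiation wr :: (finite) wellorder
begin
definition less_eq_wr :: "'a wr \<Rightarrow> 'a wr \<Rightarrow> bool" where "less_eq_wr x y = (enc x \<le> enc y)"
definition less_wr :: "'a wr \<Rightarrow> 'a wr \<Rightarrow> bool" where "less_wr x y = (enc x < enc y)"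
instance
proof
  fix P :: "'a wr \<Rightarrow> bool" and a
  assume step: "\<And>x. (\<And>y. y < x \<Longrightarrow> P y) \<Longrightarrow> P x"
  have "\<forall>x. enc x = n \<longrightarrow> P x" for n
  proof (induction n rule: less_induct)
    case (less n)
    then show ?case using step unfolding less_wr_def by blast
  qed
  thus "P a" by blast
qed (auto simp: less_eq_wr_def less_wr_def enc_inj inj_eq)
end

lemma lborel_orth_wo:
  fixes T :: "(real,'m::{finite,wellorder}) vec \<Rightarrow> (real,'m) vec"
  assumes T: "orthogonal_transformation T"
  shows "distr lborel borel T = lborel"
proof (rule lborel_eqI[symmetric])
  show "sets (distr lborel borel T) = sets borel" by simp
  have Tm: "T \<in> borel_measurable borel"
    using T orthogonal_transformation_linear linear_continuous_on borel_measurable_continuous_onI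
    by (metis linear_linear)
  fix l u :: "(real,'m) vec" assume "\<And>b. b \<in> Basis \<Longrightarrow> l \<bullet> b \<le> u \<bullet> b"
  have Ti: "orthogonal_transformation (inv T)" using T orthogonal_transformation_inv by blast
  have pre: "T -` box l u = inv T ` box l u"
    using T by (metis bij_vimage_eq_inv_image orthogonal_transformation_bij)
  have bl: "box l u \<in> lmeasurable" by simp
  have il: "inv T ` box l u \<in> lmeasurable" using measurable_orthogonal_image[OF Ti bl] .
  have ib: "inv T ` box l u \<in> sets borel" using pre Tm by (metis borel_open measurable_sets open_box space_borel vimage_Int Int_UNIV_right)
  have "emeasure (distr lborel borel T) (box l u) = emeasure lborel (inv T ` box l u)"
    using Tm pre by (simp add: emeasure_distr)
  also have "\<dots> = emeasure lebesgue (inv T ` box l u)"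
    using ib by (simp add: emeasure_completion)
  also have "\<dots> = ennreal (measure lebesgue (inv T ` box l u))"
    using il by (simp add: emeasure_eq_measure2)
  also have "\<dots> = ennreal (measure lebesgue (box l u))"
    using measure_orthogonal_image[OF Ti bl] by simp
  also have "\<dots> = emeasure lebesgue (box l u)"
    using bl by (simp add: emeasure_eq_measure2)
  also have "\<dots> = emeasure lborel (box l u)" by (simp add: emeasure_completion)
  also have "\<dots> = (\<Prod>b\<in>Basis. (u - l) \<bullet> b)"
    using \<open>\<And>b. b \<in> Basis \<Longrightarrow> l \<bullet> b \<le> u \<bullet> b\<close> by (simp add: emeasure_lborel_box_eq)
  finally show "emeasure (distr lborel borel T) (box l u) = (\<Prod>b\<in>Basis. (u - l) \<bullet> b)" .
qed


definition relP :: "(real,'n::finite) vec \<Rightarrow> (real,'n wr) vec" where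
  "relP x = (\<chi> j. x $ Rep_wr j)"
definition relQ :: "(real,'n::finite wr) vec \<Rightarrow> (real,'n) vec" where
  "relQ y = (\<chi> i. y $ Abs_wr i)"

lemma relQP[simp]: "relQ (relP x) = x" by (simp add: relP_def relQ_def Abs_wr_inverse)
lemma relPQ[simp]: "relP (relQ y) = y" by (simp add: relP_def relQ_def Rep_wr_inverse)

lemma linear_relP: "linear relP"
  by (rule linearI) (simp_all add: relP_def vec_eq_iff)
lemma linear_relQ: "linear relQ"
  by (rule linearI) (simp_all add: relQ_def vec_eq_iff)

lemma meas_relP[measurable]: "relP \<in> borel_measurable borel"
  using linear_relP by (metis linear_linear linear_continuous_on borel_measurable_continuous_onI)
lemma meas_relQ[measurable]: "relQ \<in> borel_measurable borel"
  using linear_relQ by (metis linear_linear linear_continuous_on borel_measurable_continuous_onI)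

lemma prod_Basis_vec: "(\<Prod>b\<in>(Basis :: (real,'n::finite) vec set). g b) = (\<Prod>i\<in>UNIV. g (axis i 1))"
proof -
  have B: "(Basis :: (real,'n) vec set) = (\<lambda>i. axis i 1) ` UNIV"
    by (auto simp: Basis_vec_def)
  have "inj (\<lambda>i::'n. axis i (1::real))" by (auto simp: inj_def axis_eq_axis)
  then show ?thesis unfolding B by (simp add: prod.reindex)
qed

lemma lborel_relP: "distr lborel borel (relP :: (real,'n::finite) vec \<Rightarrow> _) = lborel"
proof (rule lborel_eqI[symmetric])
  show "sets (distr lborel borel (relP :: (real,'n::finite) vec \<Rightarrow> _)) = sets borel" by simp
  fix l u :: "(real,'n wr) vec" assume le: "\<And>b. b \<in> Basis \<Longrightarrow> l \<bullet> b \<le> u \<bullet> b"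
  have pre: "relP -` box l u = box (relQ l) (relQ u)"
    apply (auto simp: mem_box_cart relP_def relQ_def)
    apply (metis Abs_wr_inverse UNIV_I)
    apply (metis Abs_wr_inverse UNIV_I)
    apply (metis Rep_wr_inverse)
    apply (metis Rep_wr_inverse)
    done
  have le2: "\<forall>b\<in>Basis. relQ l \<bullet> b \<le> relQ u \<bullet> b"
  proof
    fix b :: "(real,'n) vec" assume "b \<in> Basis"
    then obtain i where b: "b = axis i 1" by (auto simp: Basis_vec_def)
    have "axis (Abs_wr i) (1::real) \<in> Basis" by (auto simp: Basis_vec_def)
    from le[OF this] show "relQ l \<bullet> b \<le> relQ u \<bullet> b" by (simp add: b relQ_def inner_axis)
  qed
  have "emeasure (distr lborel borel relP) (box l u) = emeasure lborel (box (relQ l) (relQ u))"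
    using pre by (simp add: emeasure_distr)
  also have "\<dots> = (\<Prod>b\<in>Basis. (relQ u - relQ l) \<bullet> b)"
    using le2 by (simp add: emeasure_lborel_box_eq)
  also have "\<dots> = ennreal (\<Prod>i\<in>UNIV. (u $ Abs_wr i - l $ Abs_wr i))"
    by (simp add: prod_Basis_vec inner_axis relQ_def)
  also have "\<dots> = ennreal (\<Prod>j\<in>UNIV. (u $ j - l $ j))"
  proof -
    have "bij (Abs_wr :: 'n \<Rightarrow> 'n wr)" by (metis Abs_wr_inject Abs_wr_cases UNIV_I bij_def inj_def surj_def)
    from prod.reindex_bij_betw[OF this, of "\<lambda>j. u$j - l$j"] show ?thesis by simp
  qed
  also have "\<dots> = ennreal (\<Prod>b\<in>Basis. ((u - l) \<bullet> b))"
    by (simp add: prod_Basis_vec inner_axis)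
  finally show "emeasure (distr lborel borel relP) (box l u) = (\<Prod>b\<in>Basis. (u - l) \<bullet> b)" .
qed

lemma lborel_orth:
  fixes T :: "(real,'n::finite) vec \<Rightarrow> (real,'n) vec"
  assumes T: "orthogonal_transformation T"
  shows "distr lborel borel T = lborel"
proof -
  define T' where "T' = relP \<circ> T \<circ> relQ"
  have lT: "linear T" using T orthogonal_transformation_linear by blast
  have T'o: "orthogonal_transformation T'"
    unfolding orthogonal_transformation T'_def
  proof (intro conjI allI)
    show "linear (relP \<circ> T \<circ> relQ)" using lT linear_relP linear_relQ by (intro linear_compose)
    fix v :: "(real,'n wr) vec"
    have ip: "norm (relP x) = norm x" for x :: "(real,'n) vec"
    proof -
      have "bij (Rep_wr :: 'n wr \<Rightarrow> 'n)" by (metis Rep_wr_inject Rep_wr_cases UNIV_I bij_def inj_def surj_def)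
      then have "relP x \<bullet> relP x = x \<bullet> x" unfolding inner_vec_def relP_def
        by (simp add: sum.reindex_bij_betw[where h=Rep_wr and S=UNIV and T=UNIV and g="\<lambda>i. x $ i * x $ i"])
      then show ?thesis by (simp add: norm_eq_sqrt_inner)
    qed
    have "norm ((relP \<circ> T \<circ> relQ) v) = norm (T (relQ v))" by (simp add: ip)
    also have "\<dots> = norm (relQ v)" using T orthogonal_transformation by blast
    also have "\<dots> = norm (relP (relQ v))" by (rule ip[symmetric])
    finally show "norm ((relP \<circ> T \<circ> relQ) v) = norm v" by simp
  qed
  have Tm: "T \<in> borel_measurable borel" using lT by (metis linear_linear linear_continuous_on borel_measurable_continuous_onI)
  have T'm: "T' \<in> borel_measurable borel" using Tm unfolding T'_def by measurable
  have eq: "T = relQ \<circ> T' \<circ> relP" by (auto simp: T'_def)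
  have "distr lborel borel T = distr (distr (distr lborel borel relP) borel T') borel relQ"
  proof -
    have m1: "T' \<in> measurable (lborel :: ((real,'n wr) vec) measure) borel" using T'm by simp
    have "distr (distr lborel borel relP) borel T' = distr lborel borel (T' \<circ> relP)"
      by (rule distr_distr) (use T'm in simp_all)
    moreover have "distr (distr lborel borel (T' \<circ> relP)) borel relQ = distr lborel borel (relQ \<circ> (T' \<circ> relP))"
      by (rule distr_distr) (use T'm in simp_all)
    ultimately show ?thesis by (simp add: eq comp_assoc)
  qed
  also have "\<dots> = distr lborel borel relQ" using lborel_orth_wo[OF T'o] by (simp add: lborel_relP)
  also have "\<dots> = distr (distr lborel borel relP) borel relQ" by (simp add: lborel_relP)
  also have "\<dots> = distr lborel borel (\<lambda>x. x)" by (simp add: distr_distr comp_def)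
  also have "\<dots> = lborel" by (simp add: distr_id2)
  finally show ?thesis .
qed


lemma meas_mv[measurable]: "(\<lambda>x. (A::((real,'n::finite) vec,'m::finite) vec) *v x) \<in> borel_measurable borel"
  by (intro borel_measurable_continuous_onI linear_continuous_on matrix_vector_mul_bounded_linear)

lemma gauss_dens_norm:
  fixes x :: "(real, 'n::finite) vec"
  shows "(\<Prod>i\<in>UNIV. std_normal_density (x $ i))
     = (1 / sqrt (2*pi)) ^ CARD('n) * exp (- (norm x)\<^sup>2 / 2)"
proof -
  have "(\<Prod>i\<in>UNIV. std_normal_density (x $ i)) = (\<Prod>i\<in>UNIV. (1 / sqrt (2*pi)) * exp (- (x$i)\<^sup>2 / 2))"
    by (simp add: normal_density_def)
  also have "\<dots> = (1 / sqrt (2*pi)) ^ CARD('n) * exp (\<Sum>i\<in>UNIV. - (x$i)\<^sup>2 / 2)"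
    by (simp only: prod.distrib prod_constant exp_sum[OF finite])
  also have "(\<Sum>i\<in>UNIV. - (x$i)\<^sup>2 / 2) = - (norm x)\<^sup>2 / 2"
  proof -
    have n2: "(norm x)\<^sup>2 = (\<Sum>i\<in>UNIV. (x$i)\<^sup>2)" by (simp add: norm_vec_def L2_set_def sum_nonneg)
    show ?thesis by (simp add: n2 sum_divide_distrib[symmetric] sum_negf)
  qed
  finally show ?thesis .
qed

lemma gaussian_orth:
  fixes A :: "real^'n::finite^'n"
  assumes A: "orthogonal_matrix A"
  shows "distr gaussian borel (\<lambda>x. A *v x) = gaussian"
proof -
  let ?T = "\<lambda>x. A *v x"
  let ?g = "\<lambda>x::real^'n. ennreal (\<Prod>i\<in>UNIV. std_normal_density (x $ i))"
  have To: "orthogonal_transformation ?T"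
    using A by (simp add: orthogonal_transformation_matrix matrix_vector_mul_linear)
  have nrm: "norm (?T x) = norm x" for x using To orthogonal_transformation by blast
  have gT: "?g (?T x) = ?g x" for x by (simp only: gauss_dens_norm nrm)
  have gm: "?g \<in> borel_measurable borel" by measurable
  have "density (distr lborel borel ?T) ?g = distr (density lborel (\<lambda>x. ?g (?T x))) borel ?T"
    by (rule density_distr) (use gm in simp_all)
  then have "density lborel ?g = distr (density lborel ?g) borel ?T"
    using lborel_orth[OF To] gT by simp
  then show ?thesis unfolding gaussian_def by simp
qed

lemma diffeo_cont: "diffeo_real f \<Longrightarrow> continuous_on UNIV f \<and> continuous_on UNIV (inv f) \<and> bij f"
  unfolding diffeo_real_def
  by (metis DERIV_isCont continuous_at_imp_continuous_on)

lemma coord_diffeo_props: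
  assumes "F \<in> coord_diffeos"
  shows "F \<in> borel_measurable borel" "inv F \<in> borel_measurable borel"
    "\<And>x. inv F (F x) = x" "\<And>y. F (inv F y) = y"
proof -
  obtain f where f: "\<And>i. diffeo_real (f i)" and F: "F = (\<lambda>x. \<chi> i. f i (x $ i))"
    using assms unfolding coord_diffeos_def by blast
  define G where "G = (\<lambda>y::real^'a. \<chi> i. inv (f i) (y $ i))"
  have fc: "continuous_on UNIV (f i)" "continuous_on UNIV (inv (f i))" "bij (f i)" for i
    using diffeo_cont[OF f[of i]] by auto
  have GF: "G (F x) = x" for x
    by (simp add: F G_def vec_eq_iff bij_is_inj[OF fc(3)])
  have FG: "F (G y) = y" for y
    by (simp add: F G_def vec_eq_iff bij_is_surj[OF fc(3)] surj_f_inv_f)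
  have "bij F" using GF FG by (metis bijI' )
  then have iF: "inv F = G" using GF FG by (metis inv_equality ext)
  show "\<And>x. inv F (F x) = x" "\<And>y. F (inv F y) = y" using iF GF FG by auto
  have c1: "continuous_on UNIV F" unfolding F
    by (intro continuous_on_vec_lambda continuous_on_compose2[OF fc(1)] continuous_on_component continuous_on_id) auto
  have c2: "continuous_on UNIV G" unfolding G_def
    by (intro continuous_on_vec_lambda continuous_on_compose2[OF fc(2)] continuous_on_component continuous_on_id) auto
  show "F \<in> borel_measurable borel" using c1 by (rule borel_measurable_continuous_onI)
  show "inv F \<in> borel_measurable borel" using c2 iF by (simp add: borel_measurable_continuous_onI)
qed

lemma id_coord_diffeo: "(id :: real^'n::finite \<Rightarrow> _) \<in> coord_diffeos"
proof -
  have "diffeo_real (\<lambda>x::real. x)"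
    unfolding diffeo_real_def
    by (auto intro!: exI[of _ "\<lambda>_. 1"] derivative_eq_intros simp: inv_def bij_betw_def inj_on_def)
  then show ?thesis unfolding coord_diffeos_def
    by (intro CollectI exI[of _ "\<lambda>i x. x"]) (auto simp: id_def)
qed


lemma sets_pseq[simp]: "sets (pseq p R F k) = sets borel"
  by (cases k) (simp_all add: push_def)

lemma sets_gaussian[simp]: "sets gaussian = sets borel"
  by (simp add: gaussian_def)

lemma mc_pseq[simp]: "measurable (pseq p R F k) N = measurable borel N"
  by (rule measurable_cong_sets) simp_all
lemma mc_pseq2[simp]: "measurable N (pseq p R F k) = measurable N borel"
  by (rule measurable_cong_sets) simp_all
lemma mc_distr[simp]: "measurable (distr M (borel::'b::topological_space measure) f) N = measurable borel N"
  by (rule measurable_cong_sets) simp_all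
lemma mc_distr2[simp]: "measurable N (distr M (borel::'b::topological_space measure) f) = measurable N borel"
  by (rule measurable_cong_sets) simp_all
lemma mc_g[simp]: "measurable gaussian N = measurable borel N"
  by (rule measurable_cong_sets) simp_all
lemma mc_g2[simp]: "measurable N gaussian = measurable N borel"
  by (rule measurable_cong_sets) simp_all

lemma orth_inv:
  assumes "orthogonal_matrix (A :: real^'n::finite^'n)"
  shows "transpose A *v (A *v x) = x" "A *v (transpose A *v x) = x"
    "(A *v x) v* A = x" "A *v (x v* A) = x"
  using assms unfolding orthogonal_matrix_def
  by (metis matrix_vector_mul_assoc matrix_vector_mul_lid transpose_matrix_vector)+

lemma meas_vm[measurable]: "(\<lambda>x. x v* (A::real^'n::finite^'n)) \<in> borel_measurable borel"
  using meas_mv[of "transpose A"] by simp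

theorem proposition2:
  fixes p :: "real ^ 'n :: finite \<Rightarrow> real"
    and R :: "nat \<Rightarrow> real ^ 'n ^ 'n"
    and F :: "nat \<Rightarrow> real ^ 'n \<Rightarrow> real ^ 'n"
  assumes p_meas: "p \<in> borel_measurable borel"
    and p_nonneg: "\<And>x. p x \<ge> 0"
    and p_int: "(\<integral>\<^sup>+ x. ennreal (p x) \<partial>lborel) = 1"
    and R_orth: "\<And>k. k \<ge> 1 \<Longrightarrow> orthogonal_matrix (R k)"
    and F_in: "\<And>k. k \<ge> 1 \<Longrightarrow> F k \<in> coord_diffeos"
    and F_argmin: "\<And>k G. k \<ge> 1 \<Longrightarrow> G \<in> coord_diffeos \<Longrightarrow>
         KL (push (F k) gaussian) (push (\<lambda>x. R k *v x) (pseq p R F (k - 1)))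
           \<le> KL (push G gaussian) (push (\<lambda>x. R k *v x) (pseq p R F (k - 1)))"
  shows "\<forall>k\<ge>1. KL gaussian (pseq p R F k) \<le> KL gaussian (pseq p R F (k - 1))
              \<and> KL (qseq R F k) (density lborel (\<lambda>x. ennreal (p x)))
                  \<le> KL (qseq R F (k - 1)) (density lborel (\<lambda>x. ennreal (p x)))"
proof -
  have Fm: "F (Suc j) \<in> borel_measurable borel" "inv (F (Suc j)) \<in> borel_measurable borel"
    "\<And>x. inv (F (Suc j)) (F (Suc j) x) = x" "\<And>y. F (Suc j) (inv (F (Suc j)) y) = y" for j
    using coord_diffeo_props[OF F_in[of "Suc j"]] by auto
  have Ro: "orthogonal_matrix (R (Suc j))" for j using R_orth by simp
  have prob: "prob_space (pseq p R F k)" for k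
  proof (induction k)
    case 0
    have "emeasure (density lborel (\<lambda>x. ennreal (p x))) UNIV = (\<integral>\<^sup>+ x. ennreal (p x) * indicator UNIV x \<partial>lborel)"
      using p_meas by (intro emeasure_density) (simp_all add: measurable_compose[OF _ measurable_ennreal])
    then show ?case
      by (intro prob_spaceI) (simp add: p_int)
  next
    case (Suc k)
    interpret prob_space "pseq p R F k" by fact
    have "prob_space (distr (pseq p R F k) borel (\<lambda>x. R (Suc k) *v x))"
      by (rule prob_space_distr) (simp add: )
    then interpret P2: prob_space "distr (pseq p R F k) borel (\<lambda>x. R (Suc k) *v x)" .
    have "prob_space (distr (distr (pseq p R F k) borel (\<lambda>x. R (Suc k) *v x)) borel (inv (F (Suc k))))"
      by (rule P2.prob_space_distr) (simp add:  Fm)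
    then show ?case by (simp add: push_def)
  qed
  have sf: "sigma_finite_measure M" if "prob_space M" for M :: "(real^'n) measure"
  proof -
    interpret prob_space M by fact
    show ?thesis by unfold_locales
  qed
  have part1: "KL gaussian (pseq p R F (Suc j)) \<le> KL gaussian (pseq p R F j)" for j
  proof -
    let ?A = "R (Suc j)" and ?F = "F (Suc j)"
    let ?P' = "distr (pseq p R F j) borel (\<lambda>x. ?A *v x)"
    have probP': "prob_space ?P'"
    proof -
      interpret prob_space "pseq p R F j" by (rule prob)
      show ?thesis by (rule prob_space_distr) (simp add: )
    qed
    have sP': "sets ?P' = sets borel" by simp
    have g1: "distr (distr gaussian borel ?F) borel (inv ?F) = gaussian"
    proof -
      have "distr (distr gaussian borel ?F) borel (inv ?F) = distr gaussian borel (inv ?F \<circ> ?F)"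
        by (rule distr_distr) (simp_all add:  Fm)
      also have "\<dots> = distr gaussian borel (\<lambda>x. x)" by (simp add: comp_def Fm)
      also have "\<dots> = gaussian" by (simp add: distr_id2)
      finally show ?thesis .
    qed
    have a: "KL gaussian (pseq p R F (Suc j)) = KL (push ?F gaussian) ?P'"
    proof -
      have "KL gaussian (pseq p R F (Suc j)) = KL (distr (push ?F gaussian) borel (inv ?F)) (distr ?P' borel (inv ?F))"
        using g1 by (simp add: push_def)
      also have "\<dots> = KL (push ?F gaussian) ?P'"
        by (rule KL_distr[OF sf[OF probP'], where T'="F (Suc j)"]) (simp_all add: push_def  Fm)
      finally show ?thesis .
    qed
    have b: "KL (push ?F gaussian) ?P' \<le> KL (push id gaussian) ?P'"
      using F_argmin[of "Suc j" id] id_coord_diffeo by (simp add: push_def)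
    have c: "KL (push id gaussian) ?P' = KL gaussian (pseq p R F j)"
    proof -
      have "push id gaussian = distr gaussian borel (\<lambda>x. ?A *v x)"
        using gaussian_orth[OF Ro[of j]] by (simp add: push_def id_def distr_id2)
      then have "KL (push id gaussian) ?P' = KL (distr gaussian borel (\<lambda>x. ?A *v x)) ?P'" by simp
      also have "\<dots> = KL gaussian (pseq p R F j)"
        by (rule KL_distr[OF sf[OF prob], where T'="\<lambda>x. transpose ?A *v x"])
           (simp_all add:  orth_inv[OF Ro])
      finally show ?thesis .
    qed
    show ?thesis using a b c by simp
  qed
  have Tm: "Tcomp R F j \<in> borel_measurable borel" for j
  proof (induction j)
    case 0 show ?case by simp
  next
    case (Suc j)
    have "(\<lambda>x. transpose (R (Suc j)) *v x) \<circ> F (Suc j) \<in> borel_measurable borel"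
      by (rule measurable_comp[OF Fm(1) meas_mv])
    then show ?case
      by (simp only: Tcomp.simps comp_assoc) (rule measurable_comp[OF _ Suc.IH])
  qed
  have part2: "\<forall>Q. sets Q = sets borel \<longrightarrow> KL (push (Tcomp R F j) Q) (density lborel (\<lambda>x. ennreal (p x))) = KL Q (pseq p R F j)" for j
  proof (induction j)
    case 0
    show ?case by (simp add: push_def id_def distr_id2)
  next
    case (Suc j)
    let ?A = "R (Suc j)" and ?F = "F (Suc j)"
    let ?S = "(\<lambda>x. transpose ?A *v x) \<circ> ?F"
    have Sm0: "?S \<in> borel_measurable borel" by (rule measurable_comp[OF Fm(1) meas_mv])
    have Sm: "(\<lambda>x. x v* ?A) \<circ> ?F \<in> borel_measurable borel" using Sm0 by simp
    have m2: "inv ?F \<circ> (\<lambda>x. ?A *v x) \<in> borel_measurable borel"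
      by (rule measurable_comp[OF meas_mv Fm(2)])
    show ?case
    proof (intro allI impI)
      fix Q :: "(real^'n) measure" assume sQ: "sets Q = sets borel"
      have mcQ: "measurable Q N = measurable borel N" for N :: "(real^'n) measure"
        by (rule measurable_cong_sets) (simp_all add: sQ)
      have "push (Tcomp R F (Suc j)) Q = distr (distr Q borel ?S) borel (Tcomp R F j)"
      proof -
        have "distr (distr Q borel ?S) borel (Tcomp R F j) = distr Q borel (Tcomp R F j \<circ> ?S)"
          by (rule distr_distr) (simp_all add: mcQ Tm Sm)
        then show ?thesis by (simp add: push_def comp_def)
      qed
      then have "KL (push (Tcomp R F (Suc j)) Q) (density lborel (\<lambda>x. ennreal (p x)))
          = KL (distr Q borel ?S) (pseq p R F j)"
        using Suc.IH by (simp add: push_def)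
      also have "pseq p R F j = distr (pseq p R F (Suc j)) borel ?S"
      proof -
        have "pseq p R F (Suc j) = distr (pseq p R F j) borel (inv ?F \<circ> (\<lambda>x. ?A *v x))"
          by (simp add: push_def, rule distr_distr) (simp_all add:  Fm)
        then have "distr (pseq p R F (Suc j)) borel ?S = distr (pseq p R F j) borel (?S \<circ> (inv ?F \<circ> (\<lambda>x. ?A *v x)))"
        proof -
          assume eq: "pseq p R F (Suc j) = distr (pseq p R F j) borel (inv ?F \<circ> (\<lambda>x. ?A *v x))"
          show ?thesis unfolding eq by (rule distr_distr) (use Sm0 m2 in simp_all)
        qed
        also have "\<dots> = distr (pseq p R F j) borel (\<lambda>x. x)"
          by (simp add: comp_def Fm orth_inv[OF Ro])
        also have "\<dots> = pseq p R F j" by (simp add: distr_id2)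
        finally show ?thesis by simp
      qed
      also have "KL (distr Q borel ?S) (distr (pseq p R F (Suc j)) borel ?S) = KL Q (pseq p R F (Suc j))"
        by (rule KL_distr[OF sf[OF prob], where T'="inv ?F \<circ> (\<lambda>x. ?A *v x)"])
           (simp_all del: pseq.simps add: sQ Sm m2 Fm orth_inv[OF Ro])
      finally show "KL (push (Tcomp R F (Suc j)) Q) (density lborel (\<lambda>x. ennreal (p x))) = KL Q (pseq p R F (Suc j))" .
    qed
  qed
  have q: "KL (qseq R F j) (density lborel (\<lambda>x. ennreal (p x))) = KL gaussian (pseq p R F j)" for j
    using part2[of j] by (simp add: qseq_def)
  show ?thesis
  proof (intro allI impI)
    fix k :: nat assume "k \<ge> 1"
    then obtain j where k: "k = Suc j" by (cases k) auto
    show "KL gaussian (pseq p R F k) \<le> KL gaussian (pseq p R F (k - 1))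
              \<and> KL (qseq R F k) (density lborel (\<lambda>x. ennreal (p x)))
                  \<le> KL (qseq R F (k - 1)) (density lborel (\<lambda>x. ennreal (p x)))"
      using part1[of j] by (simp add: k q)
  qed
qed

end
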